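(* Let $A\in\mathbb{R}^{n\times m}$ have distinct columns and suppose $\mathrm{New}(A)$ is full dimensional (has nonempty interior in $\mathbb{R}^n$), every column of $A$ is either an extreme point of $\mathrm{New}(A)$ or lies in its interior, and either (1) at most one column lies in the interior of $\mathrm{New}(A)$, or (2) $\mathrm{New}(A)$ has exactly $n+1$ extreme points and at most two columns lie in its interior. Then $C_{\mathrm{SAGE}}(A)=C_{\mathrm{NNS}}(A)$.
   Context: Let $A\in\mathbb{R}^{n\times m}$ have distinct columns $a_1,\dots,a_m$. For $c\in\mathbb{R}^m$, $\mathrm{Sig}(A,c)$ denotes $x\mapsto\sum_{i=1}^m c_i\exp(a_i^\top x)$. $\mathrm{New}(A)=\mathrm{conv}\{a_1,\dots,a_m\}$. $C_{\mathrm{NNS}}(A)=\{c\in\mathbb{R}^m:\mathrm{Sig}(A,c)(x)\ge 0\ \forall x\in\mathbb{R}^n\}$, $C_{\mathrm{AGE}}(A,k)=\{c\in C_{\mathrm{NNS}}(A): c_i\ge 0\ \forall i\ne k\}$, $C_{\mathrm{SAGE}}(A)=\sum_{k=1}^m C_{\mathrm{AGE}}(A,k)$. *)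

theory Defs
  imports "HOL-Analysis.Analysis"
begin

text \<open>The matrix A is given by its columns a i (i ranging over a finite index
type 'm), each a vector in real^'n. Coefficient vectors c are functions 'm => real.\<close>

definition Sig :: "('m::finite \<Rightarrow> real^'n) \<Rightarrow> ('m \<Rightarrow> real) \<Rightarrow> real^'n \<Rightarrow> real" where
  "Sig a c x = (\<Sum>i\<in>UNIV. c i * exp (a i \<bullet> x))"

definition New :: "('m::finite \<Rightarrow> real^'n) \<Rightarrow> (real^'n) set" where
  "New a = convex hull (range a)"

definition C_NNS :: "('m::finite \<Rightarrow> real^'n) \<Rightarrow> ('m \<Rightarrow> real) set" where
  "C_NNS a = {c. \<forall>x. Sig a c x \<ge> 0}"

definition C_AGE :: "('m::finite \<Rightarrow> real^'n) \<Rightarrow> 'm \<Rightarrow> ('m \<Rightarrow> real) set" where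
  "C_AGE a k = {c \<in> C_NNS a. \<forall>i. i \<noteq> k \<longrightarrow> c i \<ge> 0}"

definition C_SAGE :: "('m::finite \<Rightarrow> real^'n) \<Rightarrow> ('m \<Rightarrow> real) set" where
  "C_SAGE a = {c. \<exists>f. (\<forall>k. f k \<in> C_AGE a k) \<and> (\<forall>i. c i = (\<Sum>k\<in>UNIV. f k i))}"

end

theory Submission
  imports Defs
begin


lemma conv_idx:
  fixes a :: "'m \<Rightarrow> 'v::real_vector"
  assumes fin: "finite E" and inj: "inj_on a E"
  shows "y \<in> convex hull (a ` E) \<longleftrightarrow> (\<exists>u. (\<forall>j\<in>E. 0 \<le> u j) \<and> sum u E = 1 \<and> (\<Sum>j\<in>E. u j *\<^sub>R a j) = y)"
proof
  assume "y \<in> convex hull (a ` E)"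
  then obtain U where U: "\<forall>x\<in>a ` E. 0 \<le> U x" "sum U (a ` E) = 1" "(\<Sum>x\<in>a ` E. U x *\<^sub>R x) = y"
    using convex_hull_finite[of "a ` E"] fin by auto
  have "sum (U \<circ> a) E = 1" using U(2) sum.reindex[OF inj, of U] by simp
  moreover have "(\<Sum>j\<in>E. (U \<circ> a) j *\<^sub>R a j) = y" using U(3) sum.reindex[OF inj, of "\<lambda>x. U x *\<^sub>R x"] by simp
  ultimately show "\<exists>u. (\<forall>j\<in>E. 0 \<le> u j) \<and> sum u E = 1 \<and> (\<Sum>j\<in>E. u j *\<^sub>R a j) = y"
    using U(1) by (intro exI[of _ "U \<circ> a"]) auto
next
  assume "\<exists>u. (\<forall>j\<in>E. 0 \<le> u j) \<and> sum u E = 1 \<and> (\<Sum>j\<in>E. u j *\<^sub>R a j) = y"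
  then obtain u where u: "\<forall>j\<in>E. 0 \<le> u j" "sum u E = 1" "(\<Sum>j\<in>E. u j *\<^sub>R a j) = y" by blast
  have "y \<in> convex hull (a ` E)"
    unfolding u(3)[symmetric]
    by (rule convex_sum) (use u fin in \<open>auto simp: hull_inc\<close>)
  then show "y \<in> convex hull (a ` E)" .
qed

lemma aff_idx:
  fixes a :: "'m \<Rightarrow> 'v::real_vector"
  assumes fin: "finite E" and inj: "inj_on a E" and ind: "\<not> affine_dependent (a ` E)"
    and r1: "sum r E = 0" and r2: "(\<Sum>j\<in>E. r j *\<^sub>R a j) = 0"
  shows "\<forall>j\<in>E. r j = 0"
proof (rule ccontr)
  assume "\<not> (\<forall>j\<in>E. r j = 0)"
  then obtain j where j: "j \<in> E" "r j \<noteq> 0" by blast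
  define U where "U x = r (inv_into E a x)" for x
  have UA: "U (a i) = r i" if "i \<in> E" for i using inv_into_f_f[OF inj that] by (simp add: U_def)
  have "sum U (a ` E) = 0" using r1 sum.reindex[OF inj, of U] UA by simp
  moreover have "(\<Sum>x\<in>a ` E. U x *\<^sub>R x) = 0" using r2 sum.reindex[OF inj, of "\<lambda>x. U x *\<^sub>R x"] UA by simp
  moreover have "\<exists>v\<in>a ` E. U v \<noteq> 0" using j UA by auto
  ultimately have "affine_dependent (a ` E)"
    using affine_dependent_explicit_finite[of "a ` E"] fin by blast
  then show False using ind by blast
qed

lemma supp_idx:
  fixes a :: "'m \<Rightarrow> 'v::real_inner"
  assumes "z \<in> convex hull (a ` E)"
  shows "\<exists>j\<in>E. z \<bullet> x \<le> a j \<bullet> x"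
proof (rule ccontr)
  assume "\<not> ?thesis"
  then have "a ` E \<subseteq> {w. x \<bullet> w < z \<bullet> x}" by (auto simp: inner_commute not_le)
  then have "convex hull (a ` E) \<subseteq> {w. x \<bullet> w < z \<bullet> x}"
    by (rule hull_minimal) (rule convex_halfspace_lt)
  then show False using assms by (auto simp: inner_commute)
qed

lemma interior_dir:
  fixes a :: "'m \<Rightarrow> 'v::euclidean_space"
  assumes "b \<in> interior (convex hull (a ` E))"
  shows "\<exists>e>0. \<forall>x. \<exists>j\<in>E. b \<bullet> x + e * norm x \<le> a j \<bullet> x"
proof -
  obtain e where e: "e > 0" "cball b e \<subseteq> convex hull (a ` E)" using assms mem_interior_cball by blast
  have "\<exists>j\<in>E. b \<bullet> x + e * norm x \<le> a j \<bullet> x" for x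
  proof (cases "x = 0")
    case True
    have "b \<in> convex hull (a ` E)" using e by auto
    then show ?thesis using supp_idx[of b a E x] True by simp
  next
    case False
    define z where "z = b + (e / norm x) *\<^sub>R x"
    have "dist b z = e" using False e by (simp add: z_def dist_norm)
    then have "z \<in> convex hull (a ` E)" using e by auto
    then obtain j where j: "j \<in> E" "z \<bullet> x \<le> a j \<bullet> x" using supp_idx by blast
    have "z \<bullet> x = b \<bullet> x + e * norm x"
      using False by (simp add: z_def inner_add_left power2_norm_eq_inner[symmetric] power2_eq_square)
    then show ?thesis using j by auto
  qed
  then show ?thesis using e by blast
qed

lemma pos_bary:
  fixes a :: "'m \<Rightarrow> 'v::euclidean_space"
  assumes fin: "finite E" and inj: "inj_on a E" and ne: "E \<noteq> {}"
    and b: "b \<in> interior (convex hull (a ` E))"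
  shows "\<exists>l. (\<forall>j\<in>E. 0 < l j) \<and> sum l E = 1 \<and> (\<Sum>j\<in>E. l j *\<^sub>R a j) = b"
proof -
  obtain e where e: "e > 0" "cball b e \<subseteq> convex hull (a ` E)" using b mem_interior_cball by blast
  define N where "N = real (card E)"
  have N: "N > 0" using fin ne by (simp add: N_def card_gt_0_iff)
  define g where "g = (\<Sum>j\<in>E. (1/N) *\<^sub>R a j)"
  define n where "n = norm (b - g) + 1"
  have n: "n > 0" unfolding n_def using norm_ge_zero[of "b - g"] by linarith
  define \<epsilon> where "\<epsilon> = e / n"
  have ep: "\<epsilon> > 0" using e n by (simp add: \<epsilon>_def)
  have en: "\<epsilon> * n = e" using n by (simp add: \<epsilon>_def)
  have "\<epsilon> * norm (b - g) \<le> \<epsilon> * n" using ep unfolding n_def by (intro mult_left_mono) auto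
  then have le: "\<epsilon> * norm (b - g) \<le> e" using en by linarith
  define b' where "b' = b + \<epsilon> *\<^sub>R (b - g)"
  have "dist b b' = \<epsilon> * norm (b - g)" using ep by (simp add: b'_def dist_norm)
  then have "b' \<in> cball b e" using le by simp
  then have "b' \<in> convex hull (a ` E)" using e by blast
  then obtain u where u: "\<forall>j\<in>E. 0 \<le> u j" "sum u E = 1" "(\<Sum>j\<in>E. u j *\<^sub>R a j) = b'"
    using conv_idx[OF fin inj] by blast
  define l where "l j = (u j + \<epsilon> / N) / (1 + \<epsilon>)" for j
  have "\<forall>j\<in>E. 0 < l j" using u(1) ep N unfolding l_def
    by (metis add_nonneg_pos add_pos_pos divide_pos_pos zero_less_one)
  moreover have "sum l E = 1"
  proof -
    have "sum l E = (\<Sum>j\<in>E. u j + \<epsilon> / N) / (1 + \<epsilon>)"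
      unfolding l_def by (rule sum_divide_distrib[symmetric])
    also have "(\<Sum>j\<in>E. u j + \<epsilon> / N) = sum u E + N * (\<epsilon> / N)"
      by (simp add: sum.distrib N_def)
    also have "\<dots> = 1 + \<epsilon>" using u(2) N by simp
    finally show ?thesis using ep by simp
  qed
  moreover have "(\<Sum>j\<in>E. l j *\<^sub>R a j) = b"
  proof -
    have "(\<Sum>j\<in>E. l j *\<^sub>R a j) = (\<Sum>j\<in>E. (1 / (1 + \<epsilon>)) *\<^sub>R (u j *\<^sub>R a j + (\<epsilon> / N) *\<^sub>R a j))"
    proof (rule sum.cong)
      fix j
      show "l j *\<^sub>R a j = (1 / (1 + \<epsilon>)) *\<^sub>R (u j *\<^sub>R a j + (\<epsilon> / N) *\<^sub>R a j)"
        unfolding l_def scaleR_add_left[symmetric] scaleR_scaleR by simp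
    qed simp
    also have "\<dots> = (1 / (1 + \<epsilon>)) *\<^sub>R ((\<Sum>j\<in>E. u j *\<^sub>R a j) + (\<Sum>j\<in>E. (\<epsilon> / N) *\<^sub>R a j))"
      by (simp only: scaleR_sum_right[symmetric] sum.distrib)
    also have "(\<Sum>j\<in>E. (\<epsilon> / N) *\<^sub>R a j) = \<epsilon> *\<^sub>R g"
      unfolding g_def scaleR_sum_right scaleR_scaleR by simp
    also have "(\<Sum>j\<in>E. u j *\<^sub>R a j) + \<epsilon> *\<^sub>R g = (1 + \<epsilon>) *\<^sub>R b"
      unfolding u(3) b'_def by (simp add: scaleR_diff_right scaleR_add_left)
    also have "(1 / (1 + \<epsilon>)) *\<^sub>R ((1 + \<epsilon>) *\<^sub>R b) = b" using ep by simp
    finally show ?thesis .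
  qed
  ultimately show ?thesis by blast
qed

lemma age_simplex:
  fixes a :: "'m \<Rightarrow> 'v::real_inner"
  assumes fin: "finite E" and ne: "E \<noteq> {}" and l0: "\<forall>j\<in>E. 0 \<le> l j" and l1: "sum l E = 1"
    and lb: "(\<Sum>j\<in>E. l j *\<^sub>R a j) = b" and K: "K \<ge> 0"
  shows "K * exp (b \<bullet> x - b \<bullet> x0) \<le> (\<Sum>j\<in>E. K * l j * exp (- (a j \<bullet> x0)) * exp (a j \<bullet> x))"
proof -
  have "exp (\<Sum>j\<in>E. l j *\<^sub>R (a j \<bullet> x - a j \<bullet> x0)) \<le> (\<Sum>j\<in>E. l j * exp (a j \<bullet> x - a j \<bullet> x0))"
    by (rule convex_on_sum[OF fin ne exp_convex l1]) (use l0 in auto)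
  moreover have "(\<Sum>j\<in>E. l j *\<^sub>R (a j \<bullet> x - a j \<bullet> x0)) = b \<bullet> x - b \<bullet> x0"
    unfolding lb[symmetric] by (simp add: inner_sum_left right_diff_distrib sum_subtractf)
  ultimately have "exp (b \<bullet> x - b \<bullet> x0) \<le> (\<Sum>j\<in>E. l j * exp (a j \<bullet> x - a j \<bullet> x0))" by simp
  then have "K * exp (b \<bullet> x - b \<bullet> x0) \<le> K * (\<Sum>j\<in>E. l j * exp (a j \<bullet> x - a j \<bullet> x0))"
    using K by (rule mult_left_mono)
  also have "\<dots> = (\<Sum>j\<in>E. K * l j * exp (- (a j \<bullet> x0)) * exp (a j \<bullet> x))"
    by (simp add: sum_distrib_left exp_diff exp_minus field_simps)
  finally show ?thesis .
qed



lemma lim0: fixes d :: real assumes "d < 0" shows "(\<lambda>n. exp (real n * d)) \<longlonglongrightarrow> 0"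
proof -
  have "norm (exp d) < 1" using assms by simp
  then have "(\<lambda>n. exp d ^ n) \<longlonglongrightarrow> 0" by (rule LIMSEQ_power_zero)
  then show ?thesis by (simp add: exp_of_nat_mult)
qed

lemma nns_dir:
  fixes a :: "'m::finite \<Rightarrow> real^'n"
  assumes c: "c \<in> C_NNS a" and neg: "\<forall>i. a i \<bullet> y > s \<longrightarrow> c i \<le> 0"
  shows "0 \<le> (\<Sum>i\<in>{i. a i \<bullet> y = s}. c i)"
proof -
  define g where "g n = (\<Sum>i\<in>UNIV. if a i \<bullet> y \<le> s then c i * exp (real n * (a i \<bullet> y - s)) else 0)" for n
  have ge: "0 \<le> g n" for n
  proof -
    have "0 \<le> Sig a c (real n *\<^sub>R y) * exp (- (real n * s))" using c by (simp add: C_NNS_def)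
    also have "\<dots> = (\<Sum>i\<in>UNIV. c i * exp (real n * (a i \<bullet> y - s)))"
      unfolding Sig_def sum_distrib_right
      by (intro sum.cong refl) (simp add: mult.assoc exp_add[symmetric] right_diff_distrib)
    also have "\<dots> \<le> g n" unfolding g_def using neg
      by (intro sum_mono) (auto simp: mult_nonpos_nonneg not_le)
    finally show ?thesis .
  qed
  have lim: "g \<longlonglongrightarrow> (\<Sum>i\<in>UNIV. if a i \<bullet> y = s then c i else 0)"
    unfolding g_def
  proof (intro tendsto_sum)
    fix i
    show "(\<lambda>n. if a i \<bullet> y \<le> s then c i * exp (real n * (a i \<bullet> y - s)) else 0) \<longlonglongrightarrow> (if a i \<bullet> y = s then c i else 0)"
    proof (cases "a i \<bullet> y < s")
      case True
      then have "(\<lambda>n. c i * exp (real n * (a i \<bullet> y - s))) \<longlonglongrightarrow> c i * 0"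
        by (intro tendsto_mult tendsto_const lim0) simp
      then show ?thesis using True by simp
    next
      case False
      then show ?thesis by (cases "a i \<bullet> y = s") auto
    qed
  qed
  have "0 \<le> (\<Sum>i\<in>UNIV. if a i \<bullet> y = s then c i else 0)"
    using LIMSEQ_le_const[OF lim] ge by auto
  then show ?thesis by (simp add: sum.If_cases)
qed

lemma nns_extreme:
  fixes a :: "'m::finite \<Rightarrow> real^'n"
  assumes inj: "inj a" and c: "c \<in> C_NNS a" and ext: "a k extreme_point_of New a"
  shows "0 \<le> c k"
proof -
  have "polyhedron (New a)" unfolding New_def by (rule polyhedron_convex_hull) simp
  then have "{a k} exposed_face_of New a" using ext face_of_singleton exposed_face_of_polyhedron by blast
  then obtain u b where sub: "New a \<subseteq> {x. u \<bullet> x \<le> b}" and eq: "{a k} = New a \<inter> {x. u \<bullet> x = b}"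
    unfolding exposed_face_of_def by blast
  have mem: "a i \<in> New a" for i unfolding New_def by (simp add: hull_inc)
  have S: "{i. a i \<bullet> u = b} = {k}"
  proof -
    have "a i \<bullet> u = b \<longleftrightarrow> i = k" for i
    proof
      assume "a i \<bullet> u = b"
      then have "a i \<in> {a k}" using eq mem by (auto simp: inner_commute)
      then show "i = k" using inj by (auto dest: injD)
    next
      assume "i = k" then show "a i \<bullet> u = b" using eq by (auto simp: inner_commute)
    qed
    then show ?thesis by auto
  qed
  have le: "a i \<bullet> u \<le> b" for i using subsetD[OF sub mem[of i]] by (simp add: inner_commute)
  have "\<forall>i. a i \<bullet> u > b \<longrightarrow> c i \<le> 0" using le by (auto simp: not_less[symmetric])
  from nns_dir[OF c this] S show ?thesis by simp
qed

lemma age_sage: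
  fixes a :: "'m::finite \<Rightarrow> real^'n"
  assumes c: "c \<in> C_NNS a" and pos: "\<forall>i. i \<noteq> k \<longrightarrow> 0 \<le> c i"
  shows "c \<in> C_SAGE a"
proof -
  define f where "f j i = (if j = k then c i else 0)" for j i
  have "f j \<in> C_AGE a j" for j
  proof (cases "j = k")
    case True
    have "f k = c" by (simp add: f_def fun_eq_iff)
    then show ?thesis using True c pos by (simp add: C_AGE_def)
  next
    case False then show ?thesis by (simp add: f_def C_AGE_def C_NNS_def Sig_def)
  qed
  moreover have "c i = (\<Sum>j\<in>UNIV. f j i)" for i by (simp add: f_def)
  ultimately show ?thesis unfolding C_SAGE_def by blast
qed

lemma sage_nns:
  fixes a :: "'m::finite \<Rightarrow> real^'n"
  shows "C_SAGE a \<subseteq> C_NNS a"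
proof
  fix c assume "c \<in> C_SAGE a"
  then obtain f where f: "\<forall>k. f k \<in> C_AGE a k" "\<forall>i. c i = (\<Sum>k\<in>UNIV. f k i)"
    unfolding C_SAGE_def by blast
  have "0 \<le> Sig a c x" for x
  proof -
    have "Sig a c x = (\<Sum>i\<in>UNIV. \<Sum>k\<in>UNIV. f k i * exp (a i \<bullet> x))"
      by (simp add: Sig_def f(2) sum_distrib_right)
    also have "\<dots> = (\<Sum>k\<in>UNIV. Sig a (f k) x)"
      unfolding Sig_def by (rule sum.swap)
    also have "0 \<le> \<dots>" using f(1) by (intro sum_nonneg) (auto simp: C_AGE_def C_NNS_def)
    finally show ?thesis .
  qed
  then show "c \<in> C_NNS a" by (simp add: C_NNS_def)
qed





lemma two_neg':
  fixes a :: "'m::finite \<Rightarrow> real^'n"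
  assumes inj: "inj a" and pq: "p \<noteq> q"
    and E: "E = UNIV - {p,q}"
    and extS: "{x. x extreme_point_of New a} = a ` E"
    and intp: "a p \<in> interior (New a)" and intq: "a q \<in> interior (New a)"
    and card: "card (a ` E) = CARD('n) + 1"
    and c: "c \<in> C_NNS a" and cp: "c p < 0" and cq: "c q < 0" and cE: "\<forall>j\<in>E. 0 \<le> c j"
  shows "c \<in> C_SAGE a"
proof -
  have fin: "finite E" by simp
  have injE: "inj_on a E" using inj_on_subset[OF inj] by blast
  have ne: "E \<noteq> {}" using card by auto
  have pE: "p \<notin> E" "q \<notin> E" using E by auto
  have split: "(\<Sum>i\<in>UNIV. g i) = (\<Sum>i\<in>E. g i) + g p + g q" for g :: "'m \<Rightarrow> real"
  proof -
    have U: "UNIV = insert p (insert q E)" using E by auto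
    show ?thesis unfolding U using pq pE fin by (simp add: sum.insert algebra_simps)
  qed
  have Nw: "New a = convex hull (a ` E)"
  proof -
    have "compact (New a)" "convex (New a)" unfolding New_def
      by (simp_all add: compact_convex_hull finite_imp_compact)
    then show ?thesis using Krein_Milman_Minkowski extS by metis
  qed
  have ind: "\<not> affine_dependent (a ` E)"
  proof -
    have "aff_dim (a ` E) = aff_dim (New a)" using Nw aff_dim_convex_hull by metis
    also have "\<dots> = int CARD('n)" using aff_dim_nonempty_interior[of "New a"] intp by auto
    finally show ?thesis using affine_independent_iff_card[of "a ` E"] card fin by simp
  qed
  obtain lam where lam: "\<forall>j\<in>E. 0 < lam j" "sum lam E = 1" "(\<Sum>j\<in>E. lam j *\<^sub>R a j) = a p"
    using pos_bary[OF fin injE ne] intp Nw by metis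
  obtain mu where mu: "\<forall>j\<in>E. 0 < mu j" "sum mu E = 1" "(\<Sum>j\<in>E. mu j *\<^sub>R a j) = a q"
    using pos_bary[OF fin injE ne] intq Nw by metis
  have cpos: "\<forall>j\<in>E. 0 < c j"
  proof (rule ccontr)
    assume "\<not> (\<forall>j\<in>E. 0 < c j)"
    then obtain j0 where j0: "j0 \<in> E" "c j0 = 0" using cE by force
    define J where "J = E - {j0}"
    have E_eq: "E = insert j0 J" "j0 \<notin> J" using j0 J_def by auto
    have finJ: "finite J" and injJ: "inj_on a J" using injE by (auto simp: J_def inj_on_def)
    have notin: "a p \<notin> convex hull (a ` J)"
    proof
      assume "a p \<in> convex hull (a ` J)"
      then obtain \<nu> where \<nu>: "\<forall>j\<in>J. 0 \<le> \<nu> j" "sum \<nu> J = 1" "(\<Sum>j\<in>J. \<nu> j *\<^sub>R a j) = a p"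
        using conv_idx[OF finJ injJ] by blast
      define \<nu>' where "\<nu>' j = (if j = j0 then 0 else \<nu> j)" for j
      have s1: "sum \<nu>' E = sum \<nu> J"
        unfolding E_eq(1) using E_eq(2) finJ by (simp add: \<nu>'_def sum.insert) (rule sum.cong, auto)
      have s2: "(\<Sum>j\<in>E. \<nu>' j *\<^sub>R a j) = (\<Sum>j\<in>J. \<nu> j *\<^sub>R a j)"
        unfolding E_eq(1) using E_eq(2) finJ by (simp add: \<nu>'_def sum.insert) (rule sum.cong, auto)
      define r where "r j = lam j - \<nu>' j" for j
      have "sum r E = 0" using s1 \<nu>(2) lam(2) by (simp add: r_def sum_subtractf)
      moreover have "(\<Sum>j\<in>E. r j *\<^sub>R a j) = 0" using s2 \<nu>(3) lam(3)
        by (simp add: r_def scaleR_diff_left sum_subtractf)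
      ultimately have "r j0 = 0" using aff_idx[OF fin injE ind] j0 by blast
      then show False using lam(1) j0 by (fastforce simp: r_def \<nu>'_def)
    qed
    have cl: "closed (convex hull (a ` J))"
      by (simp add: compact_imp_closed compact_convex_hull finite_imp_compact finJ)
    obtain w \<beta> where wb: "w \<bullet> a p < \<beta>" "\<forall>x\<in>convex hull (a ` J). \<beta> < w \<bullet> x"
      using separating_hyperplane_closed_point[OF convex_convex_hull cl notin] by blast
    define y where "y = - w"
    define s where "s = a p \<bullet> y"
    have Jlt: "a i \<bullet> y < s" if "i \<in> J" for i
    proof -
      have "\<beta> < w \<bullet> a i" using wb(2) hull_inc[of "a i" "a ` J"] that by blast
      then show ?thesis using wb(1) by (simp add: y_def s_def inner_commute)
    qed
    have other: "i \<in> J \<or> i = j0 \<or> i = p \<or> i = q" for i using E E_eq by auto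
    have cond: "\<forall>i. a i \<bullet> y > s \<longrightarrow> c i \<le> 0"
    proof (intro allI impI)
      fix i assume gt: "a i \<bullet> y > s"
      show "c i \<le> 0"
        using other[of i] Jlt[of i] gt j0 cp cq by (auto simp: s_def)
    qed
    define S where "S = {i. a i \<bullet> y = s}"
    have "0 \<le> sum c S" using nns_dir[OF c cond] by (simp add: S_def)
    moreover have "sum c S = c p + sum c (S - {p})"
      by (rule sum.remove) (auto simp: S_def s_def)
    moreover have "sum c (S - {p}) \<le> 0"
    proof (rule sum_nonpos)
      fix i assume "i \<in> S - {p}"
      then show "c i \<le> 0" using other[of i] Jlt[of i] j0 cq by (auto simp: S_def)
    qed
    ultimately show False using cp by linarith
  qed
  define cmin where "cmin = Min (c ` E)"
  have cmin: "0 < cmin" using cpos fin ne by (simp add: cmin_def)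
  have cminle: "cmin \<le> c j" if "j \<in> E" for j using fin that by (simp add: cmin_def)
  define P where "P x = (\<Sum>j\<in>E. c j * exp (a j \<bullet> x))" for x
  define d1 where "d1 = - c p"
  define d2 where "d2 = - c q"
  have d: "0 < d1" "0 < d2" using cp cq by (auto simp: d1_def d2_def)
  define N where "N x = d1 * exp (a p \<bullet> x) + d2 * exp (a q \<bullet> x)" for x
  have SigPN: "Sig a c x = P x - N x" for x
    unfolding Sig_def split P_def N_def d1_def d2_def by simp
  have NP: "N x \<le> P x" for x using c SigPN[of x] unfolding C_NNS_def by (metis diff_ge_0_iff_ge mem_Collect_eq)
  have Ppos: "0 < P x" for x unfolding P_def using cpos fin ne by (intro sum_pos) auto
  have Npos: "0 < N x" for x unfolding N_def using d by (intro add_pos_pos) auto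
  have bnd: "cmin * exp (b \<bullet> x) \<le> exp (- (e * norm x)) * P x"
    if H: "\<forall>x. \<exists>j\<in>E. b \<bullet> x + e * norm x \<le> a j \<bullet> x" for b e x
  proof -
    obtain j where j: "j \<in> E" "b \<bullet> x + e * norm x \<le> a j \<bullet> x" using H by blast
    have "exp (b \<bullet> x) = exp (- (e * norm x)) * exp (b \<bullet> x + e * norm x)" by (simp add: exp_add[symmetric])
    also have "\<dots> \<le> exp (- (e * norm x)) * exp (a j \<bullet> x)" using j by simp
    finally have 1: "cmin * exp (b \<bullet> x) \<le> exp (- (e * norm x)) * (cmin * exp (a j \<bullet> x))"
      using cmin by (simp add: mult_left_mono mult.left_commute)
    have "cmin * exp (a j \<bullet> x) \<le> c j * exp (a j \<bullet> x)" using cminle[OF j(1)] by simp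
    also have "\<dots> \<le> P x" unfolding P_def
      by (rule member_le_sum) (use j cE in auto)
    finally have "cmin * exp (a j \<bullet> x) \<le> P x" .
    then show ?thesis using 1 by (meson exp_gt_zero less_eq_real_def mult_left_mono order_trans)
  qed
  obtain e1 where e1: "e1 > 0" "\<forall>x. \<exists>j\<in>E. a p \<bullet> x + e1 * norm x \<le> a j \<bullet> x"
    using interior_dir[of "a p" a E] intp Nw by auto
  obtain e2 where e2: "e2 > 0" "\<forall>x. \<exists>j\<in>E. a q \<bullet> x + e2 * norm x \<le> a j \<bullet> x"
    using interior_dir[of "a q" a E] intq Nw by auto
  define e where "e = min e1 e2"
  have e: "e > 0" using e1 e2 by (simp add: e_def)
  define K where "K = (d1 + d2) / cmin"
  have K: "K > 0" using d cmin by (simp add: K_def)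
  define h where "h x = N x / P x" for x
  have hK: "h x \<le> K * exp (- (e * norm x))" for x
  proof -
    have x1: "exp (- (e1 * norm x)) \<le> exp (- (e * norm x))" "exp (- (e2 * norm x)) \<le> exp (- (e * norm x))"
      by (auto simp: e_def intro!: mult_right_mono)
    have "cmin * N x = d1 * (cmin * exp (a p \<bullet> x)) + d2 * (cmin * exp (a q \<bullet> x))"
      by (simp add: N_def algebra_simps)
    also have "\<dots> \<le> d1 * (exp (- (e * norm x)) * P x) + d2 * (exp (- (e * norm x)) * P x)"
    proof (intro add_mono mult_left_mono)
      show "cmin * exp (a p \<bullet> x) \<le> exp (- (e * norm x)) * P x"
        using bnd[OF e1(2), of x] x1(1) Ppos[of x] by (meson less_eq_real_def mult_right_mono order_trans)
      show "cmin * exp (a q \<bullet> x) \<le> exp (- (e * norm x)) * P x"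
        using bnd[OF e2(2), of x] x1(2) Ppos[of x] by (meson less_eq_real_def mult_right_mono order_trans)
    qed (use d in auto)
    finally have "cmin * N x \<le> (d1 + d2) * exp (- (e * norm x)) * P x" by (simp add: algebra_simps)
    then have "N x \<le> K * exp (- (e * norm x)) * P x" using cmin
      by (simp add: K_def field_simps)
    then show ?thesis using Ppos[of x] by (simp add: h_def pos_divide_le_eq)
  qed
  have h0: "0 < h 0" using Npos Ppos by (simp add: h_def)
  define R where "R = (\<bar>ln (h 0 / K)\<bar> + 1) / e"
  have R0: "0 \<le> R" using e by (simp add: R_def)
  have KR: "K * exp (- (e * R)) < h 0"
  proof -
    have "- (e * R) = - (\<bar>ln (h 0 / K)\<bar> + 1)" using e by (simp add: R_def)
    also have "\<dots> < ln (h 0 / K)" by linarith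
    finally have "exp (- (e * R)) < h 0 / K" using h0 K by (metis exp_less_cancel_iff exp_ln divide_pos_pos)
    then show ?thesis using K by (simp add: field_simps)
  qed
  have contP: "continuous_on UNIV P" unfolding P_def by (intro continuous_intros)
  have contN: "continuous_on UNIV N" unfolding N_def by (intro continuous_intros)
  have conth: "continuous_on (cball 0 R) h" unfolding h_def
    using Ppos by (intro continuous_on_divide continuous_on_subset[OF contP] continuous_on_subset[OF contN]) (simp_all, metis Ppos less_irrefl)
  obtain xs where xs: "xs \<in> cball 0 R" "\<forall>y\<in>cball 0 R. h y \<le> h xs"
    using continuous_attains_sup[OF compact_cball _ conth] R0 by fastforce
  have hmax: "h y \<le> h xs" for y
  proof (cases "norm y \<le> R")
    case True then show ?thesis using xs by auto
  next
    case False
    have "h y \<le> K * exp (- (e * norm y))" by (rule hK)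
    also have "\<dots> \<le> K * exp (- (e * R))" using False e K by auto
    also have "\<dots> < h 0" by (rule KR)
    also have "\<dots> \<le> h xs" using xs R0 by auto
    finally show ?thesis by simp
  qed
  define t where "t = h xs"
  have t1: "t \<le> 1" using NP[of xs] Ppos[of xs] by (simp add: t_def h_def)
  have F0: "N x \<le> t * P x" for x using hmax[of x] Ppos[of x] by (simp add: t_def h_def pos_divide_le_eq)
  have Fxs: "N xs = t * P xs" using Ppos[of xs] by (simp add: t_def h_def)
  define w where "w j = t * c j * exp (a j \<bullet> xs)" for j
  define u1 where "u1 = d1 * exp (a p \<bullet> xs)"
  define u2 where "u2 = d2 * exp (a q \<bullet> xs)"
  have grad: "(\<Sum>j\<in>E. w j * (a j \<bullet> y)) = u1 * (a p \<bullet> y) + u2 * (a q \<bullet> y)" for y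
  proof -
    define \<phi> where "\<phi> s = t * (\<Sum>j\<in>E. c j * exp (a j \<bullet> xs + s * (a j \<bullet> y)))
       - (d1 * exp (a p \<bullet> xs + s * (a p \<bullet> y)) + d2 * exp (a q \<bullet> xs + s * (a q \<bullet> y)))" for s
    have \<phi>eq: "\<phi> s = t * P (xs + s *\<^sub>R y) - N (xs + s *\<^sub>R y)" for s
      by (simp add: \<phi>_def P_def N_def inner_add_right)
    have le: "\<forall>s. \<bar>0 - s\<bar> < 1 \<longrightarrow> \<phi> 0 \<le> \<phi> s"
      using F0 Fxs by (simp add: \<phi>eq)
    have D1: "((\<lambda>s. \<Sum>j\<in>E. c j * exp (a j \<bullet> xs + s * (a j \<bullet> y))) has_real_derivative
               (\<Sum>j\<in>E. c j * exp (a j \<bullet> xs) * (a j \<bullet> y))) (at 0)"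
      by (rule DERIV_sum) (auto intro!: derivative_eq_intros)
    have D: "(\<phi> has_real_derivative
        t * (\<Sum>j\<in>E. c j * exp (a j \<bullet> xs) * (a j \<bullet> y)) - (u1 * (a p \<bullet> y) + u2 * (a q \<bullet> y))) (at 0)"
      unfolding \<phi>_def u1_def u2_def by (auto intro!: derivative_eq_intros D1 simp: mult_ac)
    have "t * (\<Sum>j\<in>E. c j * exp (a j \<bullet> xs) * (a j \<bullet> y)) - (u1 * (a p \<bullet> y) + u2 * (a q \<bullet> y)) = 0"
      using DERIV_local_min[OF D _ le] by simp
    then show ?thesis by (simp add: w_def sum_distrib_left algebra_simps)
  qed
  define z where "z = (\<Sum>j\<in>E. w j *\<^sub>R a j) - u1 *\<^sub>R a p - u2 *\<^sub>R a q"
  have "z \<bullet> y = 0" for y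
    unfolding z_def using grad[of y] by (simp add: inner_diff_left inner_sum_left)
  then have z0: "z = 0" by (metis inner_eq_zero_iff)
  have sumw: "sum w E = u1 + u2"
    using Fxs by (simp add: w_def P_def N_def u1_def u2_def sum_distrib_left mult.assoc)
  define r where "r j = w j - u1 * lam j - u2 * mu j" for j
  have "sum r E = 0" using sumw lam(2) mu(2)
    by (simp add: r_def sum_subtractf sum_distrib_left[symmetric])
  moreover have "(\<Sum>j\<in>E. r j *\<^sub>R a j) = 0"
  proof -
    have "(\<Sum>j\<in>E. r j *\<^sub>R a j) = (\<Sum>j\<in>E. w j *\<^sub>R a j) - u1 *\<^sub>R (\<Sum>j\<in>E. lam j *\<^sub>R a j)
          - u2 *\<^sub>R (\<Sum>j\<in>E. mu j *\<^sub>R a j)"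
      by (simp add: r_def scaleR_diff_left sum_subtractf scaleR_sum_right)
    also have "\<dots> = z" using lam(3) mu(3) by (simp add: z_def)
    finally show ?thesis using z0 by simp
  qed
  ultimately have r0: "\<forall>j\<in>E. r j = 0" using aff_idx[OF fin injE ind] by blast
  have wE: "w j * exp (- (a j \<bullet> xs)) = t * c j" for j
    by (simp add: w_def exp_minus)
  have wsplit: "w j = u1 * lam j + u2 * mu j" if "j \<in> E" for j
    using r0 that by (force simp: r_def)
  have u: "0 \<le> u1" "0 \<le> u2" using d by (auto simp: u1_def u2_def)
  define c1 where "c1 i = (if i \<in> E then u1 * lam i * exp (- (a i \<bullet> xs)) + (1 - t) * c i
                         else if i = p then c p else 0)" for i
  define c2 where "c2 i = (if i \<in> E then u2 * mu i * exp (- (a i \<bullet> xs))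
                         else if i = q then c q else 0)" for i
  define f where "f k = (if k = p then c1 else if k = q then c2 else (\<lambda>_. 0))" for k
  have c1N: "c1 \<in> C_NNS a"
  proof -
    have "0 \<le> Sig a c1 x" for x
    proof -
      have "Sig a c1 x = (\<Sum>j\<in>E. u1 * lam j * exp (- (a j \<bullet> xs)) * exp (a j \<bullet> x))
               + (1 - t) * P x + c p * exp (a p \<bullet> x)"
        unfolding Sig_def split using pE pq
        by (simp add: c1_def P_def sum.distrib distrib_right sum_distrib_left mult.assoc)
      moreover have "u1 * exp (a p \<bullet> x - a p \<bullet> xs) \<le> (\<Sum>j\<in>E. u1 * lam j * exp (- (a j \<bullet> xs)) * exp (a j \<bullet> x))"
        by (rule age_simplex[OF fin ne _ lam(2) lam(3) u(1)]) (use lam(1) in auto)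
      moreover have "u1 * exp (a p \<bullet> x - a p \<bullet> xs) = - c p * exp (a p \<bullet> x)"
        by (simp add: u1_def d1_def exp_diff)
      moreover have "0 \<le> (1 - t) * P x" using t1 Ppos[of x] by simp
      ultimately show ?thesis by linarith
    qed
    then show ?thesis by (simp add: C_NNS_def)
  qed
  have c2N: "c2 \<in> C_NNS a"
  proof -
    have "0 \<le> Sig a c2 x" for x
    proof -
      have "Sig a c2 x = (\<Sum>j\<in>E. u2 * mu j * exp (- (a j \<bullet> xs)) * exp (a j \<bullet> x))
               + c q * exp (a q \<bullet> x)"
        unfolding Sig_def split using pE pq
        by (simp add: c2_def)
      moreover have "u2 * exp (a q \<bullet> x - a q \<bullet> xs) \<le> (\<Sum>j\<in>E. u2 * mu j * exp (- (a j \<bullet> xs)) * exp (a j \<bullet> x))"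
        by (rule age_simplex[OF fin ne _ mu(2) mu(3) u(2)]) (use mu(1) in auto)
      moreover have "u2 * exp (a q \<bullet> x - a q \<bullet> xs) = - c q * exp (a q \<bullet> x)"
        by (simp add: u2_def d2_def exp_diff)
      ultimately show ?thesis by linarith
    qed
    then show ?thesis by (simp add: C_NNS_def)
  qed
  have fA: "f k \<in> C_AGE a k" for k
  proof -
    have c1pos: "0 \<le> c1 i" if "i \<noteq> p" for i
    proof (cases "i \<in> E")
      case True
      then show ?thesis using u lam(1) t1 cE
        by (auto simp: c1_def less_imp_le intro!: add_nonneg_nonneg mult_nonneg_nonneg)
    qed (use that in \<open>simp add: c1_def\<close>)
    have c2pos: "0 \<le> c2 i" if "i \<noteq> q" for i
    proof (cases "i \<in> E")
      case True
      then show ?thesis using u mu(1)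
        by (auto simp: c2_def less_imp_le intro!: mult_nonneg_nonneg)
    qed (use that in \<open>simp add: c2_def\<close>)
    show ?thesis
      using c1N c2N c1pos c2pos pq by (auto simp: f_def C_AGE_def C_NNS_def Sig_def)
  qed
  have fs: "c i = (\<Sum>k\<in>UNIV. f k i)" for i
  proof -
    have "(\<Sum>k\<in>UNIV. f k i) = c1 i + c2 i"
    proof -
      have "(\<Sum>k\<in>E. f k i) = 0" using pE by (intro sum.neutral) (auto simp: f_def)
      then show ?thesis unfolding split using pq by (simp add: f_def)
    qed
    also have "\<dots> = c i"
    proof (cases "i \<in> E")
      case True
      have "c1 i + c2 i = w i * exp (- (a i \<bullet> xs)) + (1 - t) * c i"
        using True by (simp add: c1_def c2_def wsplit algebra_simps)
      also have "\<dots> = c i" by (simp add: wE algebra_simps)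
      finally show ?thesis .
    next
      case False
      then have "i = p \<or> i = q" using E by auto
      then show ?thesis using pE pq by (auto simp: c1_def c2_def)
    qed
    finally show ?thesis by simp
  qed
  show ?thesis unfolding C_SAGE_def using fA fs by blast
qed

theorem mainTheorem18:
  fixes a :: "'m::finite \<Rightarrow> real^'n"
  assumes distinct: "inj a"
    and full: "interior (New a) \<noteq> {}"
    and ext_or_int: "\<forall>i. a i extreme_point_of New a \<or> a i \<in> interior (New a)"
    and cases: "card {i. a i \<in> interior (New a)} \<le> 1 \<or>
               (card {x. x extreme_point_of New a} = CARD('n) + 1 \<and>
                card {i. a i \<in> interior (New a)} \<le> 2)"
  shows "C_SAGE a = C_NNS a"
proof
  show "C_SAGE a \<subseteq> C_NNS a" by (rule sage_nns)
  show "C_NNS a \<subseteq> C_SAGE a"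
  proof
    fix c assume c: "c \<in> C_NNS a"
    define I where "I = {i. a i \<in> interior (New a)}"
    have negI: "i \<in> I" if "c i < 0" for i
    proof -
      have "\<not> a i extreme_point_of New a" using nns_extreme[OF distinct c, of i] that by linarith
      then show ?thesis using ext_or_int unfolding I_def by blast
    qed
    show "c \<in> C_SAGE a"
    proof (cases "\<exists>k. \<forall>i. i \<noteq> k \<longrightarrow> 0 \<le> c i")
      case True then show ?thesis using age_sage[OF c] by blast
    next
      case False
      then have ex: "\<forall>k. \<exists>i. i \<noteq> k \<and> c i < 0" by (simp add: not_le)
      then obtain p where p: "c p < 0" by blast
      from ex obtain q where q: "q \<noteq> p" "c q < 0" by blast
      have sub: "{p,q} \<subseteq> I" using negI p q by auto
      have "2 \<le> card I" using card_mono[OF _ sub] q by simp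
      then have "\<not> card I \<le> 1" by linarith
      then have c2: "card {x. x extreme_point_of New a} = CARD('n) + 1" and "card I \<le> 2"
        using cases unfolding I_def[symmetric] by blast+
      moreover have "card {p,q} = (2::nat)" using q by simp
      ultimately have "card {p,q} = card I" using \<open>2 \<le> card I\<close> by simp
      then have II: "I = {p,q}" using card_subset_eq[OF _ sub] by simp
      define E where "E = UNIV - {p,q}"
      have extE: "\<forall>j\<in>E. a j extreme_point_of New a"
        using ext_or_int II unfolding E_def I_def by auto
      have intpq: "a p \<in> interior (New a)" "a q \<in> interior (New a)" using II unfolding I_def by auto
      have extS: "{x. x extreme_point_of New a} = a ` E"
      proof
        show "a ` E \<subseteq> {x. x extreme_point_of New a}" using extE by auto
        show "{x. x extreme_point_of New a} \<subseteq> a ` E"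
        proof
          fix x assume "x \<in> {x. x extreme_point_of New a}"
          then have x: "x extreme_point_of New a" by simp
          then obtain i where i: "x = a i" using extreme_point_of_convex_hull unfolding New_def by blast
          have "i \<noteq> p" "i \<noteq> q" using extreme_point_not_in_interior[OF x] intpq i by auto
          then show "x \<in> a ` E" using i unfolding E_def by auto
        qed
      qed
      then have "card (a ` E) = CARD('n) + 1" using c2 by simp
      moreover have "\<forall>j\<in>E. 0 \<le> c j"
      proof
        fix j assume "j \<in> E"
        then have "j \<notin> I" using II unfolding E_def by auto
        then show "0 \<le> c j" using negI by (meson not_le)
      qed
      ultimately show ?thesis using two_neg'[OF distinct q(1)[symmetric] E_def extS intpq _ c p q(2)] by blast
    qed
  qed
qed



end
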